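(* Let $\{\hat f_n\}_{n\in\mathbb N}\subset L_0(\hat\nabla,\hat\mu)$, and for each $n$ let $\omega\mapsto f_n(\omega)\in L_0(\nabla_\omega,\mu_\omega)$ be the measurable section representing $\hat f_n$. Then $\sup_{n}\hat f_n$ exists in $L_0(\hat\nabla,\hat\mu)$ if and only if $\sup_n f_n(\omega)$ exists in $L_0(\nabla_\omega,\mu_\omega)$ for $\lambda$-almost every $\omega\in\Omega$. In that case $\big(\sup_n \hat f_n\big)(\omega)=\sup_n f_n(\omega)$ for $\lambda$-almost every $\omega\in\Omega$.
   Context: $(\Omega,\Sigma,\lambda)$ is a measure space with finite measure $\lambda$; $L_0(\Omega)$ is the algebra of (classes of a.e. equal) measurable real functions on $\Omega$. For each $\omega\in\Omega$, $\nabla_\omega$ is a complete Boolean algebra carrying a strictly positive finite real-valued measure $\mu_\omega$, with metric $\rho_\omega(e,g)=\mu_\omega(e\,\Delta\, g)$. The assignment $\omega\mapsto\nabla_\omega$ together with a set $L$ of sections forms a measurable bundle of Boolean algebras over $\Omega$ (closed under complements and finite suprema, with measurable distance functions and pointwise dense values). $\hat\nabla$ denotes the complete Boolean algebra of classes (modulo a.e. equality) of measurable sections $\omega\mapsto e(\omega)\in\nabla_\omega$, and $\hat\mu:\hat\nabla\to L_0(\Omega)$ is the strictly positive $L_0(\Omega)$-valued measure given by $\hat\mu(\hat e)=$ the class of $\omega\mapsto\mu_\omega(e(\omega))$. $L_0(\hat\nabla,\hat\mu)$ is the order complete vector lattice $C_\infty(Q(\hat\nabla))$ ($Q(\hat\nabla)$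 the Stone space of $\hat\nabla$), and $L_0(\nabla_\omega,\mu_\omega)$ is the usual space of measurable functions (mod null sets) over $(\nabla_\omega,\mu_\omega)$ with metric $\rho_\omega(a,b)=\int\frac{|a-b|}{1+|a-b|}d\mu_\omega$. It is known that $L_0(\hat\nabla,\hat\mu)$ is identified with the space of classes (mod a.e. equality) of measurable sections $\omega\mapsto f(\omega)\in L_0(\nabla_\omega,\mu_\omega)$ (sections that are a.e. limits in $\rho_\omega$ of step sections $\sum_i\chi_{A_i}(\omega)u_i(\omega)$, $A_i\in\Sigma$ disjoint, $u_i$ finite real combinations of measurable sections of $\nabla$); under this identification, $\hat f$ corresponds to a section $\omega\mapsto f(\omega)$, and $\hat f\le\hat g$ iff $f(\omega)\le g(\omega)$ for a.e. $\omega$. *)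

theory Defs
  imports "HOL-Analysis.Analysis"
begin

text \<open>Fibre Boolean algebras: the measure algebra of a finite measure space M w
  (measurable sets modulo null sets); L_0 of the fibre = Borel functions on M w modulo a.e.\<close>

definition symdiff :: "'a set \<Rightarrow> 'a set \<Rightarrow> 'a set" where
  "symdiff A B = (A - B) \<union> (B - A)"

definition measurable_bundle ::
  "'w measure \<Rightarrow> ('w \<Rightarrow> 'x measure) \<Rightarrow> ('w \<Rightarrow> 'x set) set \<Rightarrow> bool" where
  "measurable_bundle Om M L \<longleftrightarrow>
     finite_measure Om \<and>
     (\<forall>w. finite_measure (M w)) \<and>
     (\<forall>u\<in>L. \<forall>w. u w \<in> sets (M w)) \<and>
     (\<forall>u\<in>L. \<exists>v\<in>L. \<forall>w. measure (M w) (symdiff (v w) (space (M w) - u w)) = 0) \<and>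
     (\<forall>u\<in>L. \<forall>v\<in>L. \<exists>z\<in>L. \<forall>w. measure (M w) (symdiff (z w) (u w \<union> v w)) = 0) \<and>
     (\<forall>u\<in>L. \<forall>v\<in>L. (\<lambda>w. measure (M w) (symdiff (u w) (v w))) \<in> borel_measurable Om) \<and>
     (\<forall>w. \<forall>A\<in>sets (M w). \<forall>e>0. \<exists>u\<in>L. measure (M w) (symdiff (u w) A) < e)"

definition lin_comb_L :: "('w \<Rightarrow> 'x set) set \<Rightarrow> ('w \<Rightarrow> 'x \<Rightarrow> real) \<Rightarrow> bool" where
  "lin_comb_L L v \<longleftrightarrow> (\<exists>(J::nat set) c e. finite J \<and> (\<forall>j\<in>J. e j \<in> L) \<and>
      v = (\<lambda>w x. \<Sum>j\<in>J. c j * indicator (e j w) x))"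

definition step_section ::
  "'w measure \<Rightarrow> ('w \<Rightarrow> 'x set) set \<Rightarrow> ('w \<Rightarrow> 'x \<Rightarrow> real) \<Rightarrow> bool" where
  "step_section Om L s \<longleftrightarrow> (\<exists>(I::nat set) A u. finite I \<and> (\<forall>i\<in>I. A i \<in> sets Om) \<and>
      disjoint_family_on A I \<and> (\<forall>i\<in>I. lin_comb_L L (u i)) \<and>
      s = (\<lambda>w x. \<Sum>i\<in>I. indicator (A i) w * u i w x))"

definition rho :: "'x measure \<Rightarrow> ('x \<Rightarrow> real) \<Rightarrow> ('x \<Rightarrow> real) \<Rightarrow> real" where
  "rho N a b = (\<integral>x. \<bar>a x - b x\<bar> / (1 + \<bar>a x - b x\<bar>) \<partial>N)"

definition measurable_section ::
  "'w measure \<Rightarrow> ('w \<Rightarrow> 'x measure) \<Rightarrow> ('w \<Rightarrow> 'x set) set \<Rightarrow> ('w \<Rightarrow> 'x \<Rightarrow> real) \<Rightarrow> bool" where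
  "measurable_section Om M L f \<longleftrightarrow> (\<forall>w. f w \<in> borel_measurable (M w)) \<and>
     (\<exists>s. (\<forall>k. step_section Om L (s k)) \<and>
          (AE w in Om. (\<lambda>k. rho (M w) (s k w) (f w)) \<longlonglongrightarrow> 0))"

definition le_fib :: "'x measure \<Rightarrow> ('x \<Rightarrow> real) \<Rightarrow> ('x \<Rightarrow> real) \<Rightarrow> bool" where
  "le_fib N a b \<longleftrightarrow> (AE x in N. a x \<le> b x)"

text \<open>Order of L_0(hat nabla, hat mu), identified with classes of measurable sections.\<close>
definition le_sec :: "'w measure \<Rightarrow> ('w \<Rightarrow> 'x measure) \<Rightarrow> ('w \<Rightarrow> 'x \<Rightarrow> real) \<Rightarrow> ('w \<Rightarrow> 'x \<Rightarrow> real) \<Rightarrow> bool" where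
  "le_sec Om M f g \<longleftrightarrow> (AE w in Om. le_fib (M w) (f w) (g w))"

definition is_lub_in :: "('a \<Rightarrow> 'a \<Rightarrow> bool) \<Rightarrow> 'a set \<Rightarrow> (nat \<Rightarrow> 'a) \<Rightarrow> 'a \<Rightarrow> bool" where
  "is_lub_in le S F g \<longleftrightarrow> g \<in> S \<and> (\<forall>n. le (F n) g) \<and>
     (\<forall>h\<in>S. (\<forall>n. le (F n) h) \<longrightarrow> le g h)"

end

theory Submission
  imports Defs
begin


lemma psi_sub_aux:
  fixes t u v :: real
  assumes "0 \<le> t" "0 \<le> u" "0 \<le> v" "t \<le> u + v"
  shows "t / (1 + t) \<le> u / (1 + u) + v / (1 + v)"
proof -
  have "t / (1 + t) \<le> (u + v) / (1 + (u + v))"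
    using assms by (simp add: field_simps)
  also have "\<dots> = u / (1 + (u + v)) + v / (1 + (u + v))"
    using assms by (simp add: add_divide_distrib)
  also have "\<dots> \<le> u / (1 + u) + v / (1 + v)"
    using assms by (intro add_mono frac_le) auto
  finally show ?thesis .
qed




definition psi :: "real \<Rightarrow> real" where "psi t = \<bar>t\<bar> / (1 + \<bar>t\<bar>)"

lemma psi_nonneg: "0 \<le> psi t" by (simp add: psi_def)
lemma psi_le1: "psi t \<le> 1" by (simp add: psi_def)
lemma psi_mono: "\<bar>s\<bar> \<le> \<bar>t\<bar> \<Longrightarrow> psi s \<le> psi t"
  unfolding psi_def by (simp add: frac_le field_simps)
lemma psi_sub: "\<bar>t\<bar> \<le> \<bar>u\<bar> + \<bar>v\<bar> \<Longrightarrow> psi t \<le> psi u + psi v"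
  unfolding psi_def by (rule psi_sub_aux) auto
lemma rho_psi: "rho N a b = (\<integral>x. psi (a x - b x) \<partial>N)"
  unfolding rho_def psi_def ..

lemma psi_borel[measurable]: "psi \<in> borel_measurable borel"
  unfolding psi_def by measurable

lemma rho_integrable:
  assumes "finite_measure N" "a \<in> borel_measurable N" "b \<in> borel_measurable N"
  shows "integrable N (\<lambda>x. psi (a x - b x))"
  using assms by (intro finite_measure.integrable_const_bound[where B=1])
     (auto simp: psi_nonneg psi_le1)

lemma rho_nonneg: "0 \<le> rho N a b"
  unfolding rho_psi by (intro integral_nonneg_AE) (simp add: psi_nonneg)

lemma rho_sym: "rho N a b = rho N b a"
  unfolding rho_def by (simp add: abs_minus_commute)

lemma rho_le_tri:
  assumes "finite_measure N" "a \<in> borel_measurable N" "b \<in> borel_measurable N"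
    "c \<in> borel_measurable N" "d \<in> borel_measurable N"
    and "\<And>x. x \<in> space N \<Longrightarrow> \<bar>a x - b x\<bar> \<le> \<bar>c x\<bar> + \<bar>d x\<bar>"
  shows "rho N a b \<le> (\<integral>x. psi (c x) \<partial>N) + (\<integral>x. psi (d x) \<partial>N)"
proof -
  have "rho N a b \<le> (\<integral>x. psi (c x) + psi (d x) \<partial>N)"
    unfolding rho_psi
    using assms
    by (intro integral_mono rho_integrable Bochner_Integration.integrable_add
         finite_measure.integrable_const_bound[where B=1])
       (auto simp: psi_nonneg psi_le1 psi_sub)
  also have "\<dots> = (\<integral>x. psi (c x) \<partial>N) + (\<integral>x. psi (d x) \<partial>N)"
    using assms
    by (intro Bochner_Integration.integral_add
         finite_measure.integrable_const_bound[where B=1])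
       (auto simp: psi_nonneg psi_le1)
  finally show ?thesis .
qed

lemma rho_triangle:
  assumes "finite_measure N" "a \<in> borel_measurable N" "b \<in> borel_measurable N"
    "c \<in> borel_measurable N"
  shows "rho N a c \<le> rho N a b + rho N b c"
  unfolding rho_psi[of N a b] rho_psi[of N b c]
  by (rule rho_le_tri) (use assms in auto)

lemma rho_max:
  assumes "finite_measure N" "a \<in> borel_measurable N" "b \<in> borel_measurable N"
    "c \<in> borel_measurable N" "d \<in> borel_measurable N"
  shows "rho N (\<lambda>x. max (a x) (b x)) (\<lambda>x. max (c x) (d x)) \<le> rho N a c + rho N b d"
  unfolding rho_psi[of N a c] rho_psi[of N b d]
  by (rule rho_le_tri) (use assms in \<open>auto simp: abs_if max_def\<close>)

lemma rho_cong_AE: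
  assumes "a \<in> borel_measurable N" "a' \<in> borel_measurable N" "b \<in> borel_measurable N"
    "AE x in N. a x = a' x"
  shows "rho N a b = rho N a' b"
  unfolding rho_psi using assms by (intro integral_cong_AE) auto

lemma rho_tendsto:
  assumes "finite_measure N" "\<And>k. s k \<in> borel_measurable N" "a \<in> borel_measurable N"
    "AE x in N. (\<lambda>k. s k x) \<longlonglongrightarrow> a x"
  shows "(\<lambda>k. rho N (s k) a) \<longlonglongrightarrow> 0"
proof -
  have "(\<lambda>k. \<integral>x. psi (s k x - a x) \<partial>N) \<longlonglongrightarrow> (\<integral>x. psi (a x - a x) \<partial>N)"
  proof (rule integral_dominated_convergence[where w="\<lambda>x. 1"])
    show "integrable N (\<lambda>x. 1::real)"
      using assms(1) by (intro finite_measure.integrable_const_bound[where B=1]) auto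
    show "AE x in N. (\<lambda>k. psi (s k x - a x)) \<longlonglongrightarrow> psi (a x - a x)"
      using assms(4)
    proof eventually_elim
      case (elim x)
      have "isCont psi t" for t
        unfolding psi_def using abs_ge_zero[of t] by (intro continuous_intros) linarith
      then show ?case using elim
        by (intro isCont_tendsto_compose[where g=psi]) (auto simp: LIM_zero_iff)
    qed
  qed (use assms in \<open>auto simp: psi_nonneg psi_le1\<close>)
  then show ?thesis by (simp add: rho_psi psi_def)
qed


lemma symdiff_sub: "symdiff A C \<subseteq> symdiff A B \<union> symdiff B C"
  unfolding symdiff_def by auto

lemma symdiff_comm: "symdiff A B = symdiff B A"
  unfolding symdiff_def by auto

lemma symdiff_compl: "A \<subseteq> S \<Longrightarrow> B \<subseteq> S \<Longrightarrow> symdiff (S - A) (S - B) = symdiff A B"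
  unfolding symdiff_def by auto

lemma symdiff_Un: "symdiff (A \<union> B) (A' \<union> B') \<subseteq> symdiff A A' \<union> symdiff B B'"
  unfolding symdiff_def by auto

lemma symdiff_sets: "A \<in> sets N \<Longrightarrow> B \<in> sets N \<Longrightarrow> symdiff A B \<in> sets N"
  unfolding symdiff_def by auto

lemma null_sub:
  assumes "finite_measure N" "A \<in> sets N" "B \<in> sets N" "C \<in> sets N" "A \<subseteq> B \<union> C"
    "measure N B = 0" "measure N C = 0"
  shows "measure N A = 0"
proof -
  interpret finite_measure N by fact
  have "measure N A \<le> measure N (B \<union> C)" using assms by (intro finite_measure_mono) auto
  also have "\<dots> \<le> measure N B + measure N C" using assms by (intro measure_Un_le) auto
  finally show ?thesis using assms by (simp add: measure_nonneg antisym)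
qed

lemma nsd_trans:
  assumes "finite_measure N" "A \<in> sets N" "B \<in> sets N" "C \<in> sets N"
    "measure N (symdiff A B) = 0" "measure N (symdiff B C) = 0"
  shows "measure N (symdiff A C) = 0"
  by (rule null_sub[OF assms(1) _ _ _ symdiff_sub[of A C B]]) (use assms in \<open>simp_all add: symdiff_sets\<close>)

lemma nsd_Un:
  assumes "finite_measure N" "A \<in> sets N" "B \<in> sets N" "A' \<in> sets N" "B' \<in> sets N"
    "measure N (symdiff A A') = 0" "measure N (symdiff B B') = 0"
  shows "measure N (symdiff (A \<union> B) (A' \<union> B')) = 0"
  by (rule null_sub[OF assms(1) _ _ _ symdiff_Un[of A B A' B']]) (use assms in \<open>simp_all add: symdiff_sets\<close>)

lemma nsd_measure:
  assumes "finite_measure N" "A \<in> sets N" "B \<in> sets N" "measure N (symdiff A B) = 0"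
  shows "measure N A = measure N B"
proof -
  interpret finite_measure N by fact
  have *: "measure N X \<le> measure N Y" if "X \<in> sets N" "Y \<in> sets N" "measure N (symdiff X Y) = 0" for X Y
  proof -
    have "measure N X \<le> measure N (Y \<union> symdiff X Y)"
      using that by (intro finite_measure_mono) (auto simp: symdiff_def)
    also have "\<dots> \<le> measure N Y + measure N (symdiff X Y)"
      using that by (intro measure_Un_le) (auto intro: symdiff_sets)
    finally show ?thesis using that by simp
  qed
  show ?thesis using *[of A B] *[of B A] assms by (simp add: symdiff_comm)
qed

lemma nsd_AE:
  assumes "finite_measure N" "A \<in> sets N" "B \<in> sets N" "measure N (symdiff A B) = 0"
  shows "AE x in N. indicator A x = (indicator B x :: real)"
proof -
  interpret finite_measure N by fact
  have "AE x in N. x \<notin> symdiff A B"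
    using assms by (intro AE_not_in) (simp add: null_sets_def emeasure_eq_measure symdiff_sets)
  then show ?thesis by eventually_elim (auto simp: symdiff_def indicator_def)
qed




definition LC :: "(real \<times> ('w \<Rightarrow> 'x set)) list \<Rightarrow> 'w \<Rightarrow> 'x \<Rightarrow> real" where
  "LC xs w x = (\<Sum>(c,e)\<leftarrow>xs. c * indicator (e w) x)"

definition SF :: "('w set \<times> (real \<times> ('w \<Rightarrow> 'x set)) list) list \<Rightarrow> 'w \<Rightarrow> 'x \<Rightarrow> real" where
  "SF zs w x = (\<Sum>(A,xs)\<leftarrow>zs. indicator A w * LC xs w x)"

lemma LC_simps[simp]: "LC [] w x = 0" "LC (p # xs) w x = fst p * indicator (snd p w) x + LC xs w x"
  "LC (xs @ ys) w x = LC xs w x + LC ys w x"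
  by (auto simp: LC_def split: prod.splits)

lemma SF_simps[simp]: "SF [] w x = 0" "SF (p # zs) w x = indicator (fst p) w * LC (snd p) w x + SF zs w x"
  "SF (zs @ ys) w x = SF zs w x + SF ys w x"
  by (auto simp: SF_def split: prod.splits)

lemma LC_inter: "LC (map (\<lambda>(d,a). (d, \<lambda>w. b w \<inter> a w)) ys) w x = indicator (b w) x * LC ys w x"
  by (induction ys) (auto simp: indicator_def algebra_simps)

lemma LC_neg: "LC (map (\<lambda>(d,a). (- d, a)) ys) w x = - LC ys w x"
  by (induction ys) auto

lemma SF_inter: "SF (map (\<lambda>(B,ys). (A \<inter> B, ys)) zs) w x = indicator A w * SF zs w x"
  by (induction zs) (auto simp: indicator_def algebra_simps)

lemma SF_neg: "SF (map (\<lambda>(B,ys). (B, map (\<lambda>(d,a). (- d, a)) ys)) zs) w x = - SF zs w x"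
  by (induction zs) (auto simp: LC_neg)

locale mbun =
  fixes Om :: "'w measure" and M :: "'w \<Rightarrow> 'x measure" and L :: "('w \<Rightarrow> 'x set) set"
  assumes mb: "measurable_bundle Om M L"
begin

lemma fmOm: "finite_measure Om" using mb by (simp add: measurable_bundle_def)
lemma fmw: "finite_measure (M w)" using mb by (simp add: measurable_bundle_def)
lemma Lsets: "u \<in> L \<Longrightarrow> u w \<in> sets (M w)" using mb by (simp add: measurable_bundle_def)
lemma Lcompl: "u \<in> L \<Longrightarrow> \<exists>v\<in>L. \<forall>w. measure (M w) (symdiff (v w) (space (M w) - u w)) = 0"
  using mb by (simp add: measurable_bundle_def)
lemma LUn: "u \<in> L \<Longrightarrow> v \<in> L \<Longrightarrow> \<exists>z\<in>L. \<forall>w. measure (M w) (symdiff (z w) (u w \<union> v w)) = 0"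
  using mb by (simp add: measurable_bundle_def)
lemma Lmeas: "u \<in> L \<Longrightarrow> v \<in> L \<Longrightarrow> (\<lambda>w. measure (M w) (symdiff (u w) (v w))) \<in> borel_measurable Om"
  using mb by (simp add: measurable_bundle_def)
lemma Lne: "L \<noteq> {}"
  using mb unfolding measurable_bundle_def by (metis empty_iff sets.empty_sets zero_less_one)

definition Cs where "Cs = {a. (\<forall>w. a w \<in> sets (M w)) \<and> (\<exists>v\<in>L. \<forall>w. measure (M w) (symdiff (a w) (v w)) = 0)}"

lemma Cs_sets: "a \<in> Cs \<Longrightarrow> a w \<in> sets (M w)" by (simp add: Cs_def)

lemma L_Cs: "u \<in> L \<Longrightarrow> u \<in> Cs"
  unfolding Cs_def by (auto intro!: bexI[of _ u] Lsets simp: symdiff_def)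

lemma Cs_compl: assumes "a \<in> Cs" shows "(\<lambda>w. space (M w) - a w) \<in> Cs"
proof -
  obtain v where v: "v \<in> L" "\<And>w. measure (M w) (symdiff (a w) (v w)) = 0" using assms by (auto simp: Cs_def)
  obtain v' where v': "v' \<in> L" "\<And>w. measure (M w) (symdiff (v' w) (space (M w) - v w)) = 0" using Lcompl[OF v(1)] by auto
  have "measure (M w) (symdiff (space (M w) - a w) (v' w)) = 0" for w
  proof (rule nsd_trans[OF fmw, where B="space (M w) - v w"])
    show "measure (M w) (symdiff (space (M w) - a w) (space (M w) - v w)) = 0"
      using v assms Lsets[OF v(1), of w] sets.sets_into_space[OF Cs_sets[OF assms, of w]]
      by (subst symdiff_compl) (auto dest: sets.sets_into_space)
    show "measure (M w) (symdiff (space (M w) - v w) (v' w)) = 0"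
      using v' by (simp add: symdiff_comm)
  qed (use assms v v' Lsets in \<open>auto simp: Cs_def\<close>)
  then show ?thesis using assms v' by (auto simp: Cs_def)
qed

lemma Cs_Un: assumes "a \<in> Cs" "b \<in> Cs" shows "(\<lambda>w. a w \<union> b w) \<in> Cs"
proof -
  obtain v where v: "v \<in> L" "\<And>w. measure (M w) (symdiff (a w) (v w)) = 0" using assms by (auto simp: Cs_def)
  obtain u where u: "u \<in> L" "\<And>w. measure (M w) (symdiff (b w) (u w)) = 0" using assms by (auto simp: Cs_def)
  obtain z where z: "z \<in> L" "\<And>w. measure (M w) (symdiff (z w) (v w \<union> u w)) = 0" using LUn[OF v(1) u(1)] by auto
  have "measure (M w) (symdiff (a w \<union> b w) (z w)) = 0" for w
  proof (rule nsd_trans[OF fmw, where B="v w \<union> u w"])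
    show "measure (M w) (symdiff (a w \<union> b w) (v w \<union> u w)) = 0"
      using v u assms Lsets by (intro nsd_Un[OF fmw]) (auto simp: Cs_def)
    show "measure (M w) (symdiff (v w \<union> u w) (z w)) = 0"
      using z by (simp add: symdiff_comm)
  qed (use assms v u z Lsets in \<open>auto simp: Cs_def\<close>)
  then show ?thesis using assms z by (auto simp: Cs_def)
qed

lemma Cs_Int: assumes "a \<in> Cs" "b \<in> Cs" shows "(\<lambda>w. a w \<inter> b w) \<in> Cs"
proof -
  have "(\<lambda>w. space (M w) - ((space (M w) - a w) \<union> (space (M w) - b w))) \<in> Cs"
    using assms by (intro Cs_compl Cs_Un)
  moreover have "(\<lambda>w. space (M w) - ((space (M w) - a w) \<union> (space (M w) - b w))) = (\<lambda>w. a w \<inter> b w)"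
    using assms by (auto simp: Cs_def dest: sets.sets_into_space)
  ultimately show ?thesis by simp
qed

lemma Cs_space: "(\<lambda>w. space (M w)) \<in> Cs"
proof -
  obtain u where "u \<in> L" using Lne by auto
  then have "(\<lambda>w. u w \<union> (space (M w) - u w)) \<in> Cs" by (intro Cs_Un Cs_compl L_Cs)
  moreover have "(\<lambda>w. u w \<union> (space (M w) - u w)) = (\<lambda>w. space (M w))"
    using \<open>u \<in> L\<close> Lsets by (intro ext) (simp add: Un_absorb1 sets.sets_into_space)
  ultimately show ?thesis by simp
qed

lemma Cs_empty: "(\<lambda>w. {}) \<in> Cs"
proof -
  have "(\<lambda>w. space (M w) - space (M w)) \<in> Cs" by (intro Cs_compl Cs_space)
  then show ?thesis by simp
qed

lemma Cs_measure_meas: assumes "a \<in> Cs" shows "(\<lambda>w. measure (M w) (a w)) \<in> borel_measurable Om"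
proof -
  obtain v where v: "v \<in> L" "\<And>w. measure (M w) (symdiff (a w) (v w)) = 0" using assms by (auto simp: Cs_def)
  obtain z where z: "z \<in> L" "\<And>w. measure (M w) (symdiff ({}) (z w)) = 0" using Cs_empty by (auto simp: Cs_def)
  have "measure (M w) (a w) = measure (M w) (symdiff (v w) (z w))" for w
  proof -
    have "measure (M w) (a w) = measure (M w) (v w)"
      using v assms Lsets by (intro nsd_measure[OF fmw]) (auto simp: Cs_def)
    moreover have "measure (M w) (symdiff (v w) (z w)) = measure (M w) (v w)"
    proof (rule nsd_measure[OF fmw])
      show "measure (M w) (symdiff (symdiff (v w) (z w)) (v w)) = 0"
      proof -
        have "symdiff (symdiff (v w) (z w)) (v w) = z w" by (auto simp: symdiff_def)
        then show ?thesis using z(2)[of w] by (simp add: symdiff_def)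
      qed
    qed (use v z Lsets in \<open>auto intro: symdiff_sets\<close>)
    ultimately show ?thesis by simp
  qed
  then show ?thesis using Lmeas[OF v(1) z(1)] by simp
qed

end



definition disjSF :: "('w set \<times> 'b) list \<Rightarrow> bool" where
  "disjSF zs \<longleftrightarrow> (\<forall>w. (\<Sum>p\<leftarrow>zs. indicator (fst p) w) \<le> (1::real))"

lemma sum_ind_inter:
  "(\<Sum>p\<leftarrow>map (\<lambda>(B,ys). (A \<inter> B, ys)) zs. indicator (fst p) w) = indicator A w * (\<Sum>p\<leftarrow>zs. indicator (fst p) w :: real)"
  by (induction zs) (auto simp: indicator_def)

lemma sum_ind_nonneg: "0 \<le> (\<Sum>p\<leftarrow>zs. indicator (fst p) w :: real)"
  by (induction zs) auto

context mbun begin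

definition validLC where "validLC xs \<longleftrightarrow> (\<forall>p\<in>set xs. snd p \<in> Cs)"
definition validSF where "validSF zs \<longleftrightarrow> (\<forall>p\<in>set zs. fst p \<in> sets Om \<and> validLC (snd p))"

lemma validLC_simps[simp]: "validLC []" "validLC (p # xs) \<longleftrightarrow> snd p \<in> Cs \<and> validLC xs"
  "validLC (xs @ ys) \<longleftrightarrow> validLC xs \<and> validLC ys"
  by (auto simp: validLC_def)

lemma validSF_simps[simp]: "validSF []" "validSF (p # xs) \<longleftrightarrow> fst p \<in> sets Om \<and> validLC (snd p) \<and> validSF xs"
  "validSF (xs @ ys) \<longleftrightarrow> validSF xs \<and> validSF ys"
  by (auto simp: validSF_def)

lemma validLC_inter: "validLC ys \<Longrightarrow> b \<in> Cs \<Longrightarrow> validLC (map (\<lambda>(d,a). (d, \<lambda>w. b w \<inter> a w)) ys)"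
  unfolding validLC_def by (auto intro!: Cs_Int[of b, simplified])

lemma validLC_neg: "validLC ys \<Longrightarrow> validLC (map (\<lambda>(d,a). (- d, a)) ys)"
  by (auto simp: validLC_def)

lemma validSF_inter: "validSF zs \<Longrightarrow> A \<in> sets Om \<Longrightarrow> validSF (map (\<lambda>(B,ys). (A \<inter> B, ys)) zs)"
  by (auto simp: validSF_def)

lemma validSF_neg: "validSF zs \<Longrightarrow> validSF (map (\<lambda>(B,ys). (B, map (\<lambda>(d,a). (- d, a)) ys)) zs)"
  by (auto simp: validSF_def validLC_neg)

lemma LC_phi:
  assumes "validLC xs"
  shows "\<exists>ys. validLC ys \<and> (\<forall>w. \<forall>x\<in>space (M w). \<phi> (LC xs w x) = LC ys w x)"
  using assms
proof (induction xs arbitrary: \<phi>)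
  case Nil
  show ?case
    by (rule exI[of _ "[(\<phi> 0, \<lambda>w. space (M w))]"]) (simp add: Cs_space)
next
  case (Cons p xs)
  obtain c e where p: "p = (c, e)" by fastforce
  obtain ys1 where ys1: "validLC ys1" "\<forall>w. \<forall>x\<in>space (M w). \<phi> (c + LC xs w x) = LC ys1 w x"
    using Cons.IH[of "\<lambda>t. \<phi> (c + t)"] Cons.prems by auto
  obtain ys2 where ys2: "validLC ys2" "\<forall>w. \<forall>x\<in>space (M w). \<phi> (LC xs w x) = LC ys2 w x"
    using Cons.IH[of "\<phi>"] Cons.prems by auto
  have eC: "e \<in> Cs" using Cons.prems p by simp
  show ?case
  proof (intro exI conjI)
    show "validLC (map (\<lambda>(d,a). (d, \<lambda>w. e w \<inter> a w)) ys1 @ map (\<lambda>(d,a). (d, \<lambda>w. (space (M w) - e w) \<inter> a w)) ys2)"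
      using ys1 ys2 eC Cs_compl[OF eC] validLC_inter[of ys1 e] validLC_inter[of ys2 "\<lambda>w. space (M w) - e w"] by simp
    show "\<forall>w. \<forall>x\<in>space (M w). \<phi> (LC (p # xs) w x) = LC (map (\<lambda>(d,a). (d, \<lambda>w. e w \<inter> a w)) ys1 @ map (\<lambda>(d,a). (d, \<lambda>w. (space (M w) - e w) \<inter> a w)) ys2) w x"
      using ys1(2) ys2(2) p
      by (auto simp: LC_inter[where b="\<lambda>w. space (M w) - e w", simplified] LC_inter indicator_def)
  qed
qed

lemma SF_phi:
  assumes "validSF zs" "validLC g"
  shows "\<exists>ds. validSF ds \<and> disjSF ds \<and> (\<forall>w\<in>space Om. \<forall>x\<in>space (M w). \<phi> (LC g w x + SF zs w x) = SF ds w x)"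
  using assms
proof (induction zs arbitrary: g)
  case Nil
  obtain ys where ys: "validLC ys" "\<forall>w. \<forall>x\<in>space (M w). \<phi> (LC g w x) = LC ys w x"
    using LC_phi[OF Nil.prems(2)] by blast
  show ?case
    by (rule exI[of _ "[(space Om, ys)]"]) (use ys in \<open>auto simp: disjSF_def indicator_def\<close>)
next
  case (Cons p zs)
  obtain A xs where p: "p = (A, xs)" by fastforce
  have A: "A \<in> sets Om" "validLC xs" "validSF zs" using Cons.prems p by auto
  obtain ds1 where ds1: "validSF ds1" "disjSF ds1" "\<forall>w\<in>space Om. \<forall>x\<in>space (M w). \<phi> (LC (g @ xs) w x + SF zs w x) = SF ds1 w x"
    using Cons.IH[of "g @ xs"] A Cons.prems by auto
  obtain ds2 where ds2: "validSF ds2" "disjSF ds2" "\<forall>w\<in>space Om. \<forall>x\<in>space (M w). \<phi> (LC g w x + SF zs w x) = SF ds2 w x"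
    using Cons.IH[of g] A Cons.prems by auto
  let ?ds = "map (\<lambda>(B,ys). (A \<inter> B, ys)) ds1 @ map (\<lambda>(B,ys). ((space Om - A) \<inter> B, ys)) ds2"
  show ?case
  proof (intro exI conjI)
    show "validSF ?ds" using ds1 ds2 A by (simp add: validSF_inter)
    show "disjSF ?ds"
      unfolding disjSF_def
    proof
      fix w
      have "(\<Sum>p\<leftarrow>?ds. indicator (fst p) w) = indicator A w * (\<Sum>p\<leftarrow>ds1. indicator (fst p) w) + indicator (space Om - A) w * (\<Sum>p\<leftarrow>ds2. indicator (fst p) w :: real)"
        by (simp only: map_append sum_list_append sum_ind_inter)
      also have "\<dots> \<le> 1"
        using ds1(2) ds2(2) unfolding disjSF_def by (auto simp: indicator_def)
      finally show "(\<Sum>p\<leftarrow>?ds. indicator (fst p) w) \<le> (1::real)" .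
    qed
    show "\<forall>w\<in>space Om. \<forall>x\<in>space (M w). \<phi> (LC g w x + SF (p # zs) w x) = SF ?ds w x"
      using ds1(3) ds2(3) p
      by (auto simp: SF_inter indicator_def add.assoc)
  qed
qed

end



lemma LC_sum_nth: "LC ys w x = (\<Sum>j<length ys. fst (ys!j) * indicator (snd (ys!j) w) x)"
  unfolding LC_def by (simp add: sum_list_sum_nth atLeast0LessThan case_prod_unfold)

lemma SF_sum_nth: "SF zs w x = (\<Sum>i<length zs. indicator (fst (zs!i)) w * LC (snd (zs!i)) w x)"
  unfolding SF_def by (simp add: sum_list_sum_nth atLeast0LessThan case_prod_unfold)

lemma sum_list_map_sorted: "finite I \<Longrightarrow> sum_list (map f (sorted_list_of_set I)) = sum f I"
  by (simp add: sum_list_distinct_conv_sum_set)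

context mbun begin

definition rep where "rep a = (SOME v. v \<in> L \<and> (\<forall>w. measure (M w) (symdiff (a w) (v w)) = 0))"

lemma rep: assumes "a \<in> Cs" shows "rep a \<in> L" "measure (M w) (symdiff (a w) (rep a w)) = 0"
proof -
  have "\<exists>v. v \<in> L \<and> (\<forall>w. measure (M w) (symdiff (a w) (v w)) = 0)" using assms by (auto simp: Cs_def)
  then have "rep a \<in> L \<and> (\<forall>w. measure (M w) (symdiff (a w) (rep a w)) = 0)"
    unfolding rep_def by (rule someI_ex)
  then show "rep a \<in> L" "measure (M w) (symdiff (a w) (rep a w)) = 0" by auto
qed

definition repLC where "repLC xs = map (\<lambda>(c,a). (c, rep a)) xs"
definition repSF where "repSF zs = map (\<lambda>(B,xs). (B, repLC xs)) zs"

lemma LC_borel: "validLC xs \<Longrightarrow> LC xs w \<in> borel_measurable (M w)"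
proof (induction xs)
  case (Cons p xs)
  then have "snd p w \<in> sets (M w)" by (simp add: Cs_sets)
  moreover have "LC (p#xs) w = (\<lambda>x. fst p * indicator (snd p w) x + LC xs w x)" by auto
  ultimately show ?case using Cons
    by (simp only:) (intro borel_measurable_add borel_measurable_times borel_measurable_const borel_measurable_indicator; simp)
next
  case Nil
  have "LC [] w = (\<lambda>x. 0)" by auto
  then show ?case by simp
qed

lemma SF_borel: "validSF zs \<Longrightarrow> SF zs w \<in> borel_measurable (M w)"
proof (induction zs)
  case (Cons p zs)
  moreover have "SF (p#zs) w = (\<lambda>x. indicator (fst p) w * LC (snd p) w x + SF zs w x)" by auto
  ultimately show ?case using LC_borel[of "snd p" w] Cons
    by (simp only:) (intro borel_measurable_add borel_measurable_times borel_measurable_const; simp)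
next
  case Nil
  have "SF [] w = (\<lambda>x. 0)" by auto
  then show ?case by simp
qed

lemma LC_rep_AE: "validLC xs \<Longrightarrow> AE x in M w. LC (repLC xs) w x = LC xs w x"
proof (induction xs)
  case Nil then show ?case by (simp add: repLC_def)
next
  case (Cons p xs)
  have "AE x in M w. indicator (rep (snd p) w) x = (indicator (snd p w) x :: real)"
  proof (rule nsd_AE[OF fmw])
    have C: "snd p \<in> Cs" using Cons.prems by simp
    show "rep (snd p) w \<in> sets (M w)" using rep(1)[OF C] by (rule Lsets)
    show "snd p w \<in> sets (M w)" using C by (rule Cs_sets)
    show "measure (M w) (symdiff (rep (snd p) w) (snd p w)) = 0"
      using rep(2)[OF C, of w] by (simp add: symdiff_comm)
  qed
  moreover have "AE x in M w. LC (repLC xs) w x = LC xs w x" using Cons by simp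
  ultimately show ?case
    by eventually_elim (simp add: repLC_def case_prod_unfold)
qed

lemma SF_rep_AE: "validSF zs \<Longrightarrow> AE x in M w. SF (repSF zs) w x = SF zs w x"
proof (induction zs)
  case Nil then show ?case by (simp add: repSF_def)
next
  case (Cons p zs)
  have "AE x in M w. LC (repLC (snd p)) w x = LC (snd p) w x"
    using Cons.prems by (intro LC_rep_AE) simp
  moreover have "AE x in M w. SF (repSF zs) w x = SF zs w x" using Cons by simp
  ultimately show ?case
    by eventually_elim (simp add: repSF_def repLC_def case_prod_unfold)
qed

lemma lin_comb_repLC: "validLC xs \<Longrightarrow> lin_comb_L L (LC (repLC xs))"
  unfolding lin_comb_L_def
proof (intro exI conjI)
  assume "validLC xs"
  show "finite {..<length xs}" by simp
  show "\<forall>j\<in>{..<length xs}. rep (snd (xs!j)) \<in> L"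
    using \<open>validLC xs\<close> by (auto simp: validLC_def intro: rep)
  show "LC (repLC xs) = (\<lambda>w x. \<Sum>j\<in>{..<length xs}. fst (xs!j) * indicator (rep (snd (xs!j)) w) x)"
    by (intro ext) (simp add: LC_sum_nth repLC_def case_prod_unfold)
qed

lemma step_repSF:
  assumes "validSF ds" "disjSF ds"
  shows "step_section Om L (SF (repSF ds))"
  unfolding step_section_def
proof (intro exI conjI)
  show "finite {..<length ds}" by simp
  show "\<forall>i\<in>{..<length ds}. fst (ds!i) \<in> sets Om"
    using assms by (auto simp: validSF_def)
  show "\<forall>i\<in>{..<length ds}. lin_comb_L L (LC (repLC (snd (ds!i))))"
    using assms by (auto simp: validSF_def intro!: lin_comb_repLC)
  show "SF (repSF ds) = (\<lambda>w x. \<Sum>i\<in>{..<length ds}. indicator (fst (ds!i)) w * LC (repLC (snd (ds!i))) w x)"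
    by (intro ext) (simp add: SF_sum_nth repSF_def case_prod_unfold)
  show "disjoint_family_on (\<lambda>i. fst (ds!i)) {..<length ds}"
    unfolding disjoint_family_on_def
  proof (intro ballI impI)
    fix i j assume ij: "i \<in> {..<length ds}" "j \<in> {..<length ds}" "i \<noteq> j"
    show "fst (ds!i) \<inter> fst (ds!j) = {}"
    proof (rule ccontr)
      assume "fst (ds!i) \<inter> fst (ds!j) \<noteq> {}"
      then obtain w where w: "w \<in> fst (ds!i)" "w \<in> fst (ds!j)" by auto
      have "(2::real) = (\<Sum>k\<in>{i,j}. indicator (fst (ds!k)) w)"
        using w ij by simp
      also have "\<dots> \<le> (\<Sum>k<length ds. indicator (fst (ds!k)) w)"
        using ij by (intro sum_mono2) auto
      also have "\<dots> = (\<Sum>p\<leftarrow>ds. indicator (fst p) w)"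
        by (simp add: sum_list_sum_nth atLeast0LessThan)
      also have "\<dots> \<le> 1" using assms(2) by (simp add: disjSF_def)
      finally show False by simp
    qed
  qed
qed

lemma SF_to_step:
  assumes "validSF zs"
  shows "\<exists>\<sigma>. step_section Om L \<sigma> \<and> (\<forall>w\<in>space Om. AE x in M w. \<sigma> w x = SF zs w x)"
proof -
  obtain ds where ds: "validSF ds" "disjSF ds" "\<forall>w\<in>space Om. \<forall>x\<in>space (M w). id (LC [] w x + SF zs w x) = SF ds w x"
    using SF_phi[OF assms, of "[]" id] by auto
  show ?thesis
  proof (intro exI conjI ballI)
    show "step_section Om L (SF (repSF ds))" using ds(1,2) by (rule step_repSF)
    fix w assume w: "w \<in> space Om"
    show "AE x in M w. SF (repSF ds) w x = SF zs w x"
      using SF_rep_AE[OF ds(1), of w] AE_space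
    proof eventually_elim
      case (elim x)
      then show ?case using ds(3) w by simp
    qed
  qed
qed

lemma step_to_SF:
  assumes "step_section Om L s"
  shows "\<exists>zs. validSF zs \<and> s = SF zs"
proof -
  obtain I A u where s: "finite (I::nat set)" "\<forall>i\<in>I. A i \<in> sets Om" "\<forall>i\<in>I. lin_comb_L L (u i)"
      "s = (\<lambda>w x. \<Sum>i\<in>I. indicator (A i) w * u i w x)"
    using assms unfolding step_section_def by (elim exE conjE) iprover
  have "\<exists>xs. validLC xs \<and> u i = LC xs" if i: "i \<in> I" for i
  proof -
    obtain J c e where J: "finite (J::nat set)" "\<forall>j\<in>J. e j \<in> L" "u i = (\<lambda>w x. \<Sum>j\<in>J. c j * indicator (e j w) x)"
      using s(3) i unfolding lin_comb_L_def by auto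
    have v: "validLC (map (\<lambda>j. (c j, e j)) (sorted_list_of_set J))"
      using J(1,2) by (auto simp: validLC_def intro: L_Cs)
    have "LC (map (\<lambda>j. (c j, e j)) (sorted_list_of_set J)) w x = (\<Sum>j\<in>J. c j * indicator (e j w) x)" for w x
      unfolding LC_def map_map o_def using sum_list_map_sorted[OF J(1)] by simp
    then have "u i = LC (map (\<lambda>j. (c j, e j)) (sorted_list_of_set J))"
      using J(3) by (simp add: fun_eq_iff)
    with v show ?thesis by blast
  qed
  then have "\<forall>i\<in>I. \<exists>xs. validLC xs \<and> u i = LC xs" by blast
  from bchoice[OF this] obtain xsf where xsf: "\<forall>i\<in>I. validLC (xsf i) \<and> u i = LC (xsf i)" by blast
  have v: "validSF (map (\<lambda>i. (A i, xsf i)) (sorted_list_of_set I))"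
    using xsf s(1,2) by (auto simp: validSF_def)
  have "SF (map (\<lambda>i. (A i, xsf i)) (sorted_list_of_set I)) w x = (\<Sum>i\<in>I. indicator (A i) w * LC (xsf i) w x)" for w x
    unfolding SF_def map_map o_def using sum_list_map_sorted[OF s(1)] by simp
  also have "\<dots> w x = (\<Sum>i\<in>I. indicator (A i) w * u i w x)" for w x
    using xsf by (intro sum.cong) auto
  finally have "s = SF (map (\<lambda>i. (A i, xsf i)) (sorted_list_of_set I))"
    using s(4) by (simp add: fun_eq_iff)
  with v show ?thesis by blast
qed

end



context mbun begin

lemma LC_integrable: "validLC xs \<Longrightarrow> integrable (M w) (LC xs w)"
proof (induction xs)
  case Nil
  have "LC [] w = (\<lambda>x. 0)" by auto
  then show ?case by simp
next
  case (Cons p xs)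
  have "LC (p#xs) w = (\<lambda>x. fst p * indicator (snd p w) x + LC xs w x)" by auto
  moreover have "integrable (M w) (\<lambda>x. fst p * indicator (snd p w) x :: real)"
    using Cons.prems Cs_sets[of "snd p" w] finite_measure.emeasure_finite[OF fmw[of w], of "snd p w"]
    by (intro integrable_mult_right integrable_real_indicator) (auto simp: top.not_eq_extremum)
  ultimately show ?case using Cons by simp
qed

lemma LC_integral: "validLC xs \<Longrightarrow> (\<integral>x. LC xs w x \<partial>M w) = (\<Sum>p\<leftarrow>xs. fst p * measure (M w) (snd p w))"
proof (induction xs)
  case Nil
  then show ?case by simp
next
  case (Cons p xs)
  have i1: "integrable (M w) (\<lambda>x. fst p * indicator (snd p w) x :: real)"
    using Cons.prems Cs_sets[of "snd p" w] finite_measure.emeasure_finite[OF fmw[of w], of "snd p w"]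
    by (intro integrable_mult_right integrable_real_indicator) (auto simp: top.not_eq_extremum)
  have "(\<integral>x. LC (p#xs) w x \<partial>M w) = (\<integral>x. fst p * indicator (snd p w) x \<partial>M w) + (\<integral>x. LC xs w x \<partial>M w)"
    using i1 LC_integrable[of xs w] Cons.prems by (simp add: Bochner_Integration.integral_add)
  also have "\<dots> = fst p * measure (M w) (snd p w) + (\<Sum>p\<leftarrow>xs. fst p * measure (M w) (snd p w))"
    using Cons Cs_sets[of "snd p" w] by (simp add: Int_absorb2 sets.sets_into_space)
  finally show ?case by simp
qed

lemma SF_integral: "validSF zs \<Longrightarrow> (\<integral>x. SF zs w x \<partial>M w) = (\<Sum>q\<leftarrow>zs. indicator (fst q) w * (\<Sum>p\<leftarrow>snd q. fst p * measure (M w) (snd p w)))"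
proof (induction zs)
  case Nil
  then show ?case by simp
next
  case (Cons q zs)
  have "SF (q#zs) w = (\<lambda>x. indicator (fst q) w * LC (snd q) w x + SF zs w x)" by auto
  moreover have "integrable (M w) (SF zs w)"
  proof -
    have "integrable (M w) (\<lambda>x. SF zs w x)"
      using Cons.prems
    proof (induction zs)
      case Nil
      have "SF [] w = (\<lambda>x. 0)" by auto
      then show ?case by simp
    next
      case (Cons q' zs')
      have "SF (q'#zs') w = (\<lambda>x. indicator (fst q') w * LC (snd q') w x + SF zs' w x)" by auto
      then show ?case using Cons LC_integrable[of "snd q'" w] by simp
    qed
    then show ?thesis by simp
  qed
  ultimately show ?case using Cons LC_integrable[of "snd q" w] LC_integral[of "snd q" w]
    by (simp add: Bochner_Integration.integral_add)
qed

lemma LC_meas_meas: "validLC xs \<Longrightarrow> (\<lambda>w. \<Sum>p\<leftarrow>xs. fst p * measure (M w) (snd p w)) \<in> borel_measurable Om"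
proof (induction xs)
  case (Cons p xs)
  then have "(\<lambda>w. measure (M w) (snd p w)) \<in> borel_measurable Om" by (intro Cs_measure_meas) simp
  then show ?case using Cons by simp
qed simp

lemma SF_meas_meas: "validSF zs \<Longrightarrow> (\<lambda>w. \<Sum>q\<leftarrow>zs. indicator (fst q) w * (\<Sum>p\<leftarrow>snd q. fst p * measure (M w) (snd p w))) \<in> borel_measurable Om"
proof (induction zs)
  case (Cons q zs)
  then have "(\<lambda>w. \<Sum>p\<leftarrow>snd q. fst p * measure (M w) (snd p w)) \<in> borel_measurable Om" by (intro LC_meas_meas) simp
  moreover have "(\<lambda>w. indicator (fst q) w :: real) \<in> borel_measurable Om" using Cons.prems by (intro borel_measurable_indicator) simp
  ultimately show ?case using Cons by simp
qed simp

lemma step_borel: "step_section Om L s \<Longrightarrow> s w \<in> borel_measurable (M w)"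
  using step_to_SF SF_borel by blast

lemma rho_step_meas:
  assumes "step_section Om L s" "step_section Om L t"
  shows "(\<lambda>w. rho (M w) (s w) (t w)) \<in> borel_measurable Om"
proof -
  obtain zs1 where z1: "validSF zs1" "s = SF zs1" using step_to_SF[OF assms(1)] by blast
  obtain zs2 where z2: "validSF zs2" "t = SF zs2" using step_to_SF[OF assms(2)] by blast
  let ?zs = "zs1 @ map (\<lambda>(B,ys). (B, map (\<lambda>(d,a). (- d, a)) ys)) zs2"
  have v: "validSF ?zs" using z1 z2 validSF_neg by simp
  obtain ds where ds: "validSF ds" "\<forall>w\<in>space Om. \<forall>x\<in>space (M w). psi (LC [] w x + SF ?zs w x) = SF ds w x"
    using SF_phi[OF v, of "[]" psi] by auto
  have "rho (M w) (s w) (t w) = (\<Sum>q\<leftarrow>ds. indicator (fst q) w * (\<Sum>p\<leftarrow>snd q. fst p * measure (M w) (snd p w)))"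
    if w: "w \<in> space Om" for w
  proof -
    have "rho (M w) (s w) (t w) = (\<integral>x. SF ds w x \<partial>M w)"
      unfolding rho_psi
    proof (intro Bochner_Integration.integral_cong refl)
      fix x assume "x \<in> space (M w)"
      then show "psi (s w x - t w x) = SF ds w x"
        using ds(2) w z1 z2 by (simp add: SF_neg)
    qed
    then show ?thesis using SF_integral[OF ds(1)] by simp
  qed
  then show ?thesis
    using SF_meas_meas[OF ds(1)] by (subst measurable_cong) auto
qed

lemma step_max:
  assumes "step_section Om L s" "step_section Om L t"
  shows "\<exists>\<sigma>. step_section Om L \<sigma> \<and> (\<forall>w\<in>space Om. AE x in M w. \<sigma> w x = max (s w x) (t w x))"
proof -
  obtain zs1 where z1: "validSF zs1" "s = SF zs1" using step_to_SF[OF assms(1)] by blast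
  obtain zs2 where z2: "validSF zs2" "t = SF zs2" using step_to_SF[OF assms(2)] by blast
  let ?zs = "zs1 @ map (\<lambda>(B,ys). (B, map (\<lambda>(d,a). (- d, a)) ys)) zs2"
  have v: "validSF ?zs" using z1 z2 validSF_neg by simp
  obtain ds where ds: "validSF ds" "\<forall>w\<in>space Om. \<forall>x\<in>space (M w). (\<lambda>r. max r 0) (LC [] w x + SF ?zs w x) = SF ds w x"
    using SF_phi[OF v, of "[]" "\<lambda>r. max r 0"] by auto
  obtain \<sigma> where \<sigma>: "step_section Om L \<sigma>" "\<forall>w\<in>space Om. AE x in M w. \<sigma> w x = SF (ds @ zs2) w x"
    using SF_to_step[of "ds @ zs2"] ds(1) z2(1) by auto
  show ?thesis
  proof (intro exI conjI ballI)
    fix w assume w: "w \<in> space Om"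
    show "AE x in M w. \<sigma> w x = max (s w x) (t w x)"
      using \<sigma>(2) w AE_space
    proof -
      have "AE x in M w. \<sigma> w x = SF (ds @ zs2) w x" using \<sigma>(2) w by blast
      then show ?thesis using AE_space
      proof eventually_elim
        case (elim x)
        have "max (SF zs1 w x - SF zs2 w x) 0 = SF ds w x"
          using ds(2) w elim by (simp add: SF_neg)
        then show ?case using elim z1 z2 by (simp add: max_def split: if_splits)
      qed
    qed
  qed (rule \<sigma>(1))
qed

end



lemma min1_tendsto:
  fixes a :: "nat \<Rightarrow> real"
  assumes "\<And>m. 0 \<le> a m" "(\<lambda>m. min \<bar>a m\<bar> 1) \<longlonglongrightarrow> 0"
  shows "a \<longlonglongrightarrow> 0"
proof -
  have "eventually (\<lambda>m. min \<bar>a m\<bar> 1 < 1) sequentially"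
    using assms(2) by (rule order_tendstoD) simp
  then have "eventually (\<lambda>m. min \<bar>a m\<bar> 1 = a m) sequentially"
    by eventually_elim (use assms(1) in \<open>auto simp: min_def split: if_splits\<close>)
  from Lim_transform_eventually[OF assms(2) this] show ?thesis by simp
qed

context mbun begin

lemma sec_borel: "measurable_section Om M L f \<Longrightarrow> f w \<in> borel_measurable (M w)"
  by (simp add: measurable_section_def)

lemma sec_max:
  assumes "measurable_section Om M L f1" "measurable_section Om M L f2"
  shows "measurable_section Om M L (\<lambda>w x. max (f1 w x) (f2 w x))"
proof -
  obtain s where s: "\<forall>k. step_section Om L (s k)" "AE w in Om. (\<lambda>k. rho (M w) (s k w) (f1 w)) \<longlonglongrightarrow> 0"
    using assms(1) unfolding measurable_section_def by blast
  obtain t where t: "\<forall>k. step_section Om L (t k)" "AE w in Om. (\<lambda>k. rho (M w) (t k w) (f2 w)) \<longlonglongrightarrow> 0"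
    using assms(2) unfolding measurable_section_def by blast
  have "\<forall>k. \<exists>\<sigma>. step_section Om L \<sigma> \<and> (\<forall>w\<in>space Om. AE x in M w. \<sigma> w x = max (s k w x) (t k w x))"
    using s(1) t(1) step_max by blast
  then obtain \<sigma> where \<sigma>: "\<And>k. step_section Om L (\<sigma> k)"
    "\<And>k. \<forall>w\<in>space Om. AE x in M w. \<sigma> k w x = max (s k w x) (t k w x)"
    by metis
  have b1: "f1 w \<in> borel_measurable (M w)" "f2 w \<in> borel_measurable (M w)" for w
    using assms by (auto intro: sec_borel)
  have "AE w in Om. (\<lambda>k. rho (M w) (\<sigma> k w) (\<lambda>x. max (f1 w x) (f2 w x))) \<longlonglongrightarrow> 0"
    using s(2) t(2) AE_space
  proof eventually_elim
    case (elim w)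
    have le: "rho (M w) (\<sigma> k w) (\<lambda>x. max (f1 w x) (f2 w x)) \<le> rho (M w) (s k w) (f1 w) + rho (M w) (t k w) (f2 w)" for k
    proof -
      have "rho (M w) (\<sigma> k w) (\<lambda>x. max (f1 w x) (f2 w x)) = rho (M w) (\<lambda>x. max (s k w x) (t k w x)) (\<lambda>x. max (f1 w x) (f2 w x))"
        using \<sigma>(2)[of k] elim(3) step_borel[OF \<sigma>(1)] step_borel s(1) t(1) b1
        by (intro rho_cong_AE) auto
      also have "\<dots> \<le> rho (M w) (s k w) (f1 w) + rho (M w) (t k w) (f2 w)"
        using step_borel s(1) t(1) b1 by (intro rho_max fmw) auto
      finally show ?thesis .
    qed
    show ?case
    proof (rule real_tendsto_sandwich[where f="\<lambda>k. 0" and h="\<lambda>k. rho (M w) (s k w) (f1 w) + rho (M w) (t k w) (f2 w)"])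
      show "\<forall>\<^sub>F k in sequentially. 0 \<le> rho (M w) (\<sigma> k w) (\<lambda>x. max (f1 w x) (f2 w x))"
        by (simp add: rho_nonneg)
      show "\<forall>\<^sub>F k in sequentially. rho (M w) (\<sigma> k w) (\<lambda>x. max (f1 w x) (f2 w x)) \<le> rho (M w) (s k w) (f1 w) + rho (M w) (t k w) (f2 w)"
        using le by simp
      show "(\<lambda>k. rho (M w) (s k w) (f1 w) + rho (M w) (t k w) (f2 w)) \<longlonglongrightarrow> 0"
        using tendsto_add[OF elim(1) elim(2)] by simp
    qed simp
  qed
  then show ?thesis
    unfolding measurable_section_def using b1 \<sigma>(1) by auto
qed


lemma rho_lim_step:
  assumes "a \<in> borel_measurable N" "\<And>k. b k \<in> borel_measurable N" "h \<in> borel_measurable N"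
    "finite_measure N" "(\<lambda>k. rho N (b k) h) \<longlonglongrightarrow> 0"
  shows "(\<lambda>k. rho N a (b k)) \<longlonglongrightarrow> rho N a h"
proof -
  have "(\<lambda>k. rho N a (b k) - rho N a h) \<longlonglongrightarrow> 0"
  proof (rule tendsto_rabs_zero_cancel, rule real_tendsto_sandwich[where f="\<lambda>k. 0" and h="\<lambda>k. rho N (b k) h"])
    show "\<forall>\<^sub>F k in sequentially. 0 \<le> \<bar>rho N a (b k) - rho N a h\<bar>" by simp
    show "\<forall>\<^sub>F k in sequentially. \<bar>rho N a (b k) - rho N a h\<bar> \<le> rho N (b k) h"
    proof (intro always_eventually allI)
      fix k
      have "rho N a (b k) \<le> rho N a h + rho N h (b k)" using assms by (intro rho_triangle) auto
      moreover have "rho N a h \<le> rho N a (b k) + rho N (b k) h" using assms by (intro rho_triangle) auto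
      ultimately show "\<bar>rho N a (b k) - rho N a h\<bar> \<le> rho N (b k) h" by (simp add: rho_sym[of N h])
    qed
  qed (use assms in auto)
  then show ?thesis by (simp add: LIM_zero_iff)
qed

lemma sec_closed:
  assumes hs: "\<And>m. measurable_section Om M L (h m)"
    and gb: "\<And>w. g w \<in> borel_measurable (M w)"
    and conv: "AE w in Om. (\<lambda>m. rho (M w) (h m w) (g w)) \<longlonglongrightarrow> 0"
  shows "measurable_section Om M L g"
proof -
  have "\<forall>m. \<exists>s. (\<forall>k. step_section Om L (s k)) \<and> (AE w in Om. (\<lambda>k. rho (M w) (s k w) (h m w)) \<longlonglongrightarrow> 0)"
    using hs unfolding measurable_section_def by blast
  from choice[OF this] obtain s where s0: "\<forall>m. (\<forall>k. step_section Om L (s m k)) \<and> (AE w in Om. (\<lambda>k. rho (M w) (s m k w) (h m w)) \<longlonglongrightarrow> 0)"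
    by blast
  have s: "\<And>m k. step_section Om L (s m k)"
    "\<And>m. AE w in Om. (\<lambda>k. rho (M w) (s m k w) (h m w)) \<longlonglongrightarrow> 0"
    using s0 by auto
  have hb: "h m w \<in> borel_measurable (M w)" for m w using hs by (rule sec_borel)
  have sb: "s m k w \<in> borel_measurable (M w)" for m k w using s(1) by (rule step_borel)
  define D where "D m k w = lim (\<lambda>k'. rho (M w) (s m k w) (s m k' w))" for m k w
  have Dm: "D m k \<in> borel_measurable Om" for m k
    unfolding D_def by (intro borel_measurable_lim_metric rho_step_meas s(1))
  have DAE: "AE w in Om. \<forall>m k. D m k w = rho (M w) (s m k w) (h m w)"
  proof -
    have "AE w in Om. D m k w = rho (M w) (s m k w) (h m w)" for m k
      using s(2)[of m]
    proof eventually_elim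
      case (elim w)
      have "(\<lambda>k'. rho (M w) (s m k w) (s m k' w)) \<longlonglongrightarrow> rho (M w) (s m k w) (h m w)"
        using elim sb hb fmw by (intro rho_lim_step) auto
      then show ?case unfolding D_def by (rule limI)
    qed
    then show ?thesis by (simp add: AE_all_countable)
  qed
  define E where "E m k w = min \<bar>D m k w\<bar> 1" for m k w
  have Em: "E m k \<in> borel_measurable Om" for m k
    unfolding E_def by (intro borel_measurable_min borel_measurable_abs Dm borel_measurable_const)
  have E01: "0 \<le> E m k w" "E m k w \<le> 1" for m k w by (auto simp: E_def)
  have Econv: "AE w in Om. (\<lambda>k. E m k w) \<longlonglongrightarrow> 0" for m
    using DAE s(2)[of m]
  proof eventually_elim
    case (elim w)
    have "(\<lambda>k. min \<bar>rho (M w) (s m k w) (h m w)\<bar> 1) \<longlonglongrightarrow> min \<bar>0\<bar> 1"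
      by (intro tendsto_min tendsto_rabs elim tendsto_const)
    then show ?case using elim(1) by (simp add: E_def)
  qed
  have Eint: "integrable Om (E m k)" for m k
    using Em E01 by (intro finite_measure.integrable_const_bound[OF fmOm, where B=1]) auto
  have "(\<lambda>k. \<integral>w. E m k w \<partial>Om) \<longlonglongrightarrow> (\<integral>w. 0 \<partial>Om)" for m
  proof (rule integral_dominated_convergence[where w="\<lambda>w. 1"])
    show "integrable Om (\<lambda>w. 1::real)"
      by (intro finite_measure.integrable_const_bound[OF fmOm, where B=1]) auto
  qed (use Em E01 Econv in auto)
  then have "\<exists>k. (\<integral>w. E m k w \<partial>Om) < (1/2)^m" for m
  proof -
    assume a: "\<And>m. (\<lambda>k. \<integral>w. E m k w \<partial>Om) \<longlonglongrightarrow> (\<integral>w. 0 \<partial>Om)"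
    have "eventually (\<lambda>k. (\<integral>w. E m k w \<partial>Om) < (1/2)^m) sequentially"
      using a[of m] by (rule order_tendstoD) simp
    then show ?thesis by (auto simp: eventually_sequentially)
  qed
  then have "\<forall>m. \<exists>k. (\<integral>w. E m k w \<partial>Om) < (1/2)^m" by blast
  from choice[OF this] obtain \<kappa> where \<kappa>: "\<And>m. (\<integral>w. E m (\<kappa> m) w \<partial>Om) < (1/2)^m" by blast
  define t where "t m = s m (\<kappa> m)" for m
  have Isum: "summable (\<lambda>m. \<integral>w. E m (\<kappa> m) w \<partial>Om)"
  proof (rule summable_comparison_test[where g="\<lambda>m. (1/2)^m"])
    show "\<exists>N. \<forall>n\<ge>N. norm (\<integral>w. E n (\<kappa> n) w \<partial>Om) \<le> (1/2)^n"
      using \<kappa> E01 by (intro exI[of _ 0] allI impI) (simp add: integral_nonneg_AE less_imp_le)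
    show "summable (\<lambda>m. (1/2::real)^m)" by (rule summable_geometric) simp
  qed
  have "(\<integral>\<^sup>+ w. (\<Sum>m. ennreal (E m (\<kappa> m) w)) \<partial>Om) = (\<Sum>m. \<integral>\<^sup>+ w. ennreal (E m (\<kappa> m) w) \<partial>Om)"
    using Em by (intro nn_integral_suminf) auto
  also have "\<dots> = (\<Sum>m. ennreal (\<integral>w. E m (\<kappa> m) w \<partial>Om))"
    using Eint E01 by (subst nn_integral_eq_integral) auto
  also have "\<dots> \<noteq> \<infinity>"
  proof -
    have "(\<Sum>m. ennreal (\<integral>w. E m (\<kappa> m) w \<partial>Om)) \<noteq> top"
      by (rule ennreal_suminf_neq_top[OF Isum]) (use E01 in \<open>auto intro: integral_nonneg_AE\<close>)
    then show ?thesis by simp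
  qed
  finally have "AE w in Om. (\<Sum>m. ennreal (E m (\<kappa> m) w)) \<noteq> \<infinity>"
    using Em by (intro nn_integral_PInf_AE) auto
  then have Et: "AE w in Om. (\<lambda>m. E m (\<kappa> m) w) \<longlonglongrightarrow> 0"
  proof eventually_elim
    case (elim w)
    then have "summable (\<lambda>m. E m (\<kappa> m) w)"
      using E01 by (intro summable_suminf_not_top) auto
    then show ?case by (rule summable_LIMSEQ_zero)
  qed
  have "AE w in Om. (\<lambda>m. rho (M w) (t m w) (g w)) \<longlonglongrightarrow> 0"
    using Et DAE conv
  proof eventually_elim
    case (elim w)
    have "(\<lambda>m. rho (M w) (t m w) (h m w)) \<longlonglongrightarrow> 0"
    proof (rule min1_tendsto)
      show "0 \<le> rho (M w) (t m w) (h m w)" for m by (rule rho_nonneg)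
      show "(\<lambda>m. min \<bar>rho (M w) (t m w) (h m w)\<bar> 1) \<longlonglongrightarrow> 0"
        using elim(1) elim(2) by (simp add: E_def t_def)
    qed
    show ?case
    proof (rule real_tendsto_sandwich[where f="\<lambda>k. 0" and h="\<lambda>m. rho (M w) (t m w) (h m w) + rho (M w) (h m w) (g w)"])
      show "\<forall>\<^sub>F m in sequentially. 0 \<le> rho (M w) (t m w) (g w)" by (simp add: rho_nonneg)
      show "\<forall>\<^sub>F m in sequentially. rho (M w) (t m w) (g w) \<le> rho (M w) (t m w) (h m w) + rho (M w) (h m w) (g w)"
        using sb hb gb fmw by (intro always_eventually allI rho_triangle) (auto simp: t_def)
      show "(\<lambda>m. rho (M w) (t m w) (h m w) + rho (M w) (h m w) (g w)) \<longlonglongrightarrow> 0"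
        using tendsto_add[OF \<open>(\<lambda>m. rho (M w) (t m w) (h m w)) \<longlonglongrightarrow> 0\<close> elim(3)] by simp
    qed simp
  qed
  then show ?thesis
    unfolding measurable_section_def using gb s(1) by (intro conjI allI exI[of _ t]) (auto simp: t_def)
qed

end


theorem theorem3p1:
  fixes Om :: "'w measure" and M :: "'w \<Rightarrow> 'x measure" and L :: "('w \<Rightarrow> 'x set) set"
    and f :: "nat \<Rightarrow> 'w \<Rightarrow> 'x \<Rightarrow> real"
  assumes "measurable_bundle Om M L"
    and "\<forall>n. measurable_section Om M L (f n)"
  shows "((\<exists>g. is_lub_in (le_sec Om M) {h. measurable_section Om M L h} f g) \<longleftrightarrow>
           (AE w in Om. \<exists>g. is_lub_in (le_fib (M w)) (borel_measurable (M w)) (\<lambda>n. f n w) g))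
       \<and> (\<forall>g. is_lub_in (le_sec Om M) {h. measurable_section Om M L h} f g \<longrightarrow>
           (AE w in Om. is_lub_in (le_fib (M w)) (borel_measurable (M w)) (\<lambda>n. f n w) (g w)))"
proof -
  interpret mbun Om M L using assms(1) by (simp add: mbun_def)
  let ?S = "{h. measurable_section Om M L h}"
  have fsec: "measurable_section Om M L (f n)" for n using assms(2) by simp
  define hN where "hN = rec_nat (f 0) (\<lambda>N hn w x. max (hn w x) (f (Suc N) w x))"
  have hN0: "hN 0 = f 0" by (simp add: hN_def)
  have hNS: "hN (Suc N) = (\<lambda>w x. max (hN N w x) (f (Suc N) w x))" for N by (simp add: hN_def)
  have hsec: "measurable_section Om M L (hN N)" for N
    by (induction N) (simp_all add: hN0 hNS fsec sec_max)
  have hb: "hN N w \<in> borel_measurable (M w)" for N w using hsec by (rule sec_borel)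
  have f_le_h: "n \<le> N \<Longrightarrow> f n w x \<le> hN N w x" for n N w x
  proof (induction N)
    case 0 then show ?case by (simp add: hN0)
  next
    case (Suc N) then show ?case by (cases "n = Suc N") (auto simp: hNS le_Suc_eq max.coboundedI1)
  qed
  have h_in: "\<exists>n\<le>N. hN N w x = f n w x" for N w x
  proof (induction N)
    case 0 then show ?case by (simp add: hN0)
  next
    case (Suc N)
    then obtain n where "n \<le> N" "hN N w x = f n w x" by blast
    then show ?case by (auto simp: hNS max_def intro: le_SucI)
  qed
  have h_inc: "incseq (\<lambda>N. hN N w x)" for w x
    by (rule incseq_SucI) (simp add: hNS)
  define g where "g w x = lim (\<lambda>N. hN N w x)" for w x
  have gb: "g w \<in> borel_measurable (M w)" for w
    unfolding g_def by (intro borel_measurable_lim_metric hb)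
  have gpt: "(\<lambda>N. hN N w x) \<longlonglongrightarrow> g w x \<and> (\<forall>n. f n w x \<le> g w x) \<and> (\<forall>b. (\<forall>n. f n w x \<le> b) \<longrightarrow> g w x \<le> b)"
    if B: "\<exists>B. \<forall>n. f n w x \<le> B" for w x
  proof -
    obtain B where B: "\<And>n. f n w x \<le> B" using B by blast
    have "bdd_above (range (\<lambda>N. hN N w x))"
      using h_in B by (auto simp: bdd_above_def) metis
    then have c: "(\<lambda>N. hN N w x) \<longlonglongrightarrow> (SUP N. hN N w x)"
      using h_inc by (rule LIMSEQ_incseq_SUP)
    then have lim: "(\<lambda>N. hN N w x) \<longlonglongrightarrow> g w x" unfolding g_def by (metis limI)
    have "f n w x \<le> g w x" for n
      using f_le_h[of n n w x] incseq_le[OF h_inc lim, of n] by simp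
    moreover have "g w x \<le> b" if "\<forall>n. f n w x \<le> b" for b
    proof (rule LIMSEQ_le_const2[OF lim])
      show "\<exists>N. \<forall>n\<ge>N. hN n w x \<le> b" using h_in that by metis
    qed
    ultimately show ?thesis using lim by blast
  qed
  have key: "measurable_section Om M L g \<and>
      (AE w in Om. is_lub_in (le_fib (M w)) (borel_measurable (M w)) (\<lambda>n. f n w) (g w)) \<and>
      is_lub_in (le_sec Om M) ?S f g"
    if U: "AE w in Om. AE x in M w. \<exists>B. \<forall>n. f n w x \<le> B"
  proof -
    have gs: "measurable_section Om M L g"
    proof (rule sec_closed[OF hsec gb])
      show "AE w in Om. (\<lambda>N. rho (M w) (hN N w) (g w)) \<longlonglongrightarrow> 0"
        using U
      proof eventually_elim
        case (elim w)
        have "AE x in M w. (\<lambda>N. hN N w x) \<longlonglongrightarrow> g w x"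
          using elim by eventually_elim (use gpt in blast)
        then show ?case using hb gb fmw by (intro rho_tendsto) auto
      qed
    qed
    have fib: "AE w in Om. is_lub_in (le_fib (M w)) (borel_measurable (M w)) (\<lambda>n. f n w) (g w)"
      using U
    proof eventually_elim
      case (elim w)
      show ?case
        unfolding is_lub_in_def
      proof (intro conjI allI ballI impI)
        show "g w \<in> borel_measurable (M w)" by (rule gb)
        show "le_fib (M w) (f n w) (g w)" for n
          unfolding le_fib_def using elim by eventually_elim (use gpt in blast)
        fix b assume "b \<in> borel_measurable (M w)" "\<forall>n. le_fib (M w) (f n w) b"
        then have "AE x in M w. \<forall>n. f n w x \<le> b x"
          by (simp add: le_fib_def AE_all_countable)
        then show "le_fib (M w) (g w) b"
          unfolding le_fib_def using elim by eventually_elim (use gpt in blast)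
      qed
    qed
    have "is_lub_in (le_sec Om M) ?S f g"
      unfolding is_lub_in_def
    proof (intro conjI allI ballI impI)
      show "g \<in> ?S" using gs by simp
      show "le_sec Om M (f n) g" for n
        unfolding le_sec_def using fib by eventually_elim (simp add: is_lub_in_def)
      fix h assume h: "h \<in> ?S" "\<forall>n. le_sec Om M (f n) h"
      then have "AE w in Om. \<forall>n. le_fib (M w) (f n w) (h w)"
        by (simp add: le_sec_def AE_all_countable)
      then show "le_sec Om M g h"
        unfolding le_sec_def using fib
      proof eventually_elim
        case (elim w)
        then show ?case using sec_borel[of h w] h(1) by (simp add: is_lub_in_def)
      qed
    qed
    with gs fib show ?thesis by blast
  qed
  have ub_U: "AE w in Om. AE x in M w. \<exists>B. \<forall>n. f n w x \<le> B"
    if "AE w in Om. \<forall>n. le_fib (M w) (f n w) (G w)" for G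
    using that
  proof eventually_elim
    case (elim w)
    then have "AE x in M w. \<forall>n. f n w x \<le> G w x" by (simp add: le_fib_def AE_all_countable)
    then show ?case by eventually_elim blast
  qed
  have lubU: "AE w in Om. AE x in M w. \<exists>B. \<forall>n. f n w x \<le> B"
    if "is_lub_in (le_sec Om M) ?S f G" for G
  proof (rule ub_U[of G])
    from that have "\<forall>n. le_sec Om M (f n) G" by (simp add: is_lub_in_def)
    then show "AE w in Om. \<forall>n. le_fib (M w) (f n w) (G w)"
      by (simp add: le_sec_def AE_all_countable)
  qed
  have part1: "(\<exists>G. is_lub_in (le_sec Om M) ?S f G) \<longleftrightarrow>
           (AE w in Om. \<exists>g. is_lub_in (le_fib (M w)) (borel_measurable (M w)) (\<lambda>n. f n w) g)"
  proof
    assume "\<exists>G. is_lub_in (le_sec Om M) ?S f G"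
    then obtain G where "is_lub_in (le_sec Om M) ?S f G" by blast
    then have "AE w in Om. is_lub_in (le_fib (M w)) (borel_measurable (M w)) (\<lambda>n. f n w) (g w)"
      using key lubU by blast
    then show "AE w in Om. \<exists>g. is_lub_in (le_fib (M w)) (borel_measurable (M w)) (\<lambda>n. f n w) g"
      by eventually_elim blast
  next
    assume A: "AE w in Om. \<exists>g. is_lub_in (le_fib (M w)) (borel_measurable (M w)) (\<lambda>n. f n w) g"
    have "AE w in Om. AE x in M w. \<exists>B. \<forall>n. f n w x \<le> B"
      using A
    proof eventually_elim
      case (elim w)
      then obtain b where "\<forall>n. le_fib (M w) (f n w) b" by (auto simp: is_lub_in_def)
      then have "AE x in M w. \<forall>n. f n w x \<le> b x" by (simp add: le_fib_def AE_all_countable)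
      then show ?case by eventually_elim blast
    qed
    then show "\<exists>G. is_lub_in (le_sec Om M) ?S f G" using key by blast
  qed
  have part2: "AE w in Om. is_lub_in (le_fib (M w)) (borel_measurable (M w)) (\<lambda>n. f n w) (G w)"
    if G: "is_lub_in (le_sec Om M) ?S f G" for G
  proof -
    have K: "measurable_section Om M L g"
      "AE w in Om. is_lub_in (le_fib (M w)) (borel_measurable (M w)) (\<lambda>n. f n w) (g w)"
      "is_lub_in (le_sec Om M) ?S f g"
      using key lubU[OF G] by auto
    have Gg: "le_sec Om M G g" using G K(1,3) by (simp add: is_lub_in_def)
    have Gs: "measurable_section Om M L G" using G by (simp add: is_lub_in_def)
    have "AE w in Om. \<forall>n. le_fib (M w) (f n w) (G w)"
      using G by (simp add: is_lub_in_def le_sec_def AE_all_countable)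
    then show ?thesis
      using K(2) Gg unfolding le_sec_def
    proof eventually_elim
      case (elim w)
      show ?case
        unfolding is_lub_in_def
      proof (intro conjI allI ballI impI)
        show "G w \<in> borel_measurable (M w)" using Gs by (rule sec_borel)
        show "le_fib (M w) (f n w) (G w)" for n using elim(1) by simp
        fix b assume "b \<in> borel_measurable (M w)" "\<forall>n. le_fib (M w) (f n w) b"
        then have "le_fib (M w) (g w) b" using elim(2) by (simp add: is_lub_in_def)
        then show "le_fib (M w) (G w) b"
          using elim(3) unfolding le_fib_def by eventually_elim simp
      qed
    qed
  qed
  show ?thesis using part1 part2 by blast
qed

end
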